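(* Assume $K_2=1$ in (A2), $r_k\ge4/7$ for all $k\ge2$, $\kappa\ge\|f'\|_{C[-\beta,\beta]}$, $\|\phi^0\|_\infty\le\beta$, and $$\tau_1\le\min\Big\{\Big(\frac{4}{11\varsigma m(\kappa+4\varepsilon^2/h^2)\Gamma(2-\alpha)}\Big)^{1/\alpha},\Big(\frac{4}{11\kappa(1-\varsigma)m\Gamma(2-\alpha)}\Big)^{1/\alpha}\Big\}.$$ If moreover for all $n\ge1$ $$\tau_n\le\Big(\frac{4}{11(1-\varsigma)m(4\varepsilon^2/h^2+\kappa)\Gamma(2-\alpha)}\Big)^{1/\alpha},$$ then the solution of the unbalanced $L2$-$1_\sigma$-sESAV scheme satisfies $\|\phi^n\|_\infty\le\beta$ for all $n\ge1$.
   Context: Setting: $\Omega=(0,L)^2$ with periodic boundary conditions; constants $m>0$, $\varepsilon>0$, $\alpha\in(0,1)$, and $\varsigma:=\alpha/2$. The nonlinearity $f=-F'$ is one of: (double-well) $F(\phi)=\frac14(1-\phi^2)^2$, $f(\phi)=\phi-\phi^3$, with $\beta=1$; or (Flory–Huggins) $F(\phi)=\frac{\theta}{2}[(1+\phi)\ln(1+\phi)+(1-\phi)\ln(1-\phi)]-\frac{\theta_c}{2}\phi^2$, $f(\phi)=\frac{\theta}{2}\ln\frac{1-\phi}{1+\phi}+\theta_c\phi$ on $(-1,1)$, with $\theta_c>\theta>0$ and $\beta\in(0,1)$ the positive root of $f$. In both cases $f(\pm\beta)=0$. Spatial discretization: $M\in\mathbb N$, $h=L/M$; $\mathbb V_h$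 is the space of real grid functions $v=\{v_{ij}\}_{i,j\in\mathbb Z}$ that are $M$-periodic in each index; $\langle v,w\rangle=h^2\sum_{i,j=1}^Mv_{ij}w_{ij}$, $\|v\|_\infty=\max_{1\le i,j\le M}|v_{ij}|$; $\Delta_hv_{ij}=h^{-2}(v_{i+1,j}+v_{i-1,j}+v_{i,j+1}+v_{i,j-1}-4v_{ij})$. Scalar functions act on grid functions pointwise. $E_{1h}[v]=\langle F(v),1\rangle$ and $g_h(v,w)=\exp(w)/\exp(E_{1h}[v])$ for $v\in\mathbb V_h$ (with $\|v\|_\infty<1$ in the Flory–Huggins case) and $w\in\mathbb R$. Auxiliary functional: $V:\mathbb R\to\mathbb R$ satisfies (A1) $V\in C^1(\mathbb R)\cap W^{2,\infty}(\mathbb R)$, $V(1)=1$, $V'(1)=0$, $|V'|\le K_1$; (A2) $0\le V\le K_2$ for a constant $K_2>0$; (A3) $|z_1-1|\le|z_2-1|$ implies $|V(z_1)-1|\le|V(z_2)-1|$. Time grid: $0=t_0<t_1<\dots<t_N=T$, $\tau_k=t_k-t_{k-1}$, $r_k=\tau_k/\tau_{k-1}$ ($k\ge2$), $\nabla_\tau v^k=v^k-v^{k-1}$, $\mathbb D_\tau v^k=\nabla_\tau v^k/\tau_k$, $\omega_\mu(t)=t^{\mu-1}/\Gamma(\mu)$. Constant $\kappa\ge0$; data $\phi^0\in\mathbb V_h$, $R^0\in\mathbb R$. For $n\ge2$ the predicted solution is $\hat\phi^n=\min\{\max\{(1+r_n)\phi^{n-1}-r_n\phi^{n-2},-\beta\},\beta\}$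 (pointwise). $L2$-$1_\sigma$ discretization: $t_{k-\varsigma}=(1-\varsigma)t_k+\varsigma t_{k-1}$, $t_{k-1/2}=(t_k+t_{k-1})/2$; $a^{(n)}_{n-k}=\frac1{\tau_k}\int_{t_{k-1}}^{\min\{t_k,t_{n-\varsigma}\}}\omega_{1-\alpha}(t_{n-\varsigma}-s)\,ds$ ($1\le k\le n$), $b^{(n)}_{n-k}=\frac{2}{\tau_k(\tau_k+\tau_{k+1})}\int_{t_{k-1}}^{t_k}(s-t_{k-1/2})\omega_{1-\alpha}(t_{n-\varsigma}-s)\,ds$ ($1\le k\le n-1$); $B^{(1)}_0=a^{(1)}_0$, and for $n\ge2$: $B^{(n)}_0=a^{(n)}_0+b^{(n)}_1/r_n$, $B^{(n)}_{n-k}=a^{(n)}_{n-k}+b^{(n)}_{n-k+1}/r_k-b^{(n)}_{n-k}$ for $2\le k\le n-1$, $B^{(n)}_{n-1}=a^{(n)}_{n-1}-b^{(n)}_{n-1}$; $\tilde{\mathbb D}^\alpha_\tau v^n=\sum_{k=1}^nB^{(n)}_{n-k}\nabla_\tau v^k$; $w^{k-\varsigma}=(1-\varsigma)w^k+\varsigma w^{k-1}$. Unbalanced $L2$-$1_\sigma$-sESAV scheme: $\hat\phi^1\in\mathbb V_h$ with $\|\hat\phi^1\|_\infty\le\beta$ solves $B^{(1)}_0(\hat\phi^1-\phi^0)=m(\varepsilon^2\Delta_h\hat\phi^{1-\varsigma}+f(\hat\phi^{1-\varsigma}))$; for $n\ge2$, $\hat\phi^n$ is the predicted solution above. For $n\ge1$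 set $\hat\phi^{n-\varsigma}=(1-\varsigma)\hat\phi^n+\varsigma\phi^{n-1}$ and $V^{n-\varsigma}=V(g_h(\hat\phi^{n-\varsigma},R^{n-1}))$, and define $(\phi^n,R^n)$ by $\tilde{\mathbb D}^\alpha_\tau\phi^n=m(\varepsilon^2\Delta_h\phi^{n-\varsigma}+V^{n-\varsigma}f(\hat\phi^{n-\varsigma})-\kappa(\phi^{n-\varsigma}-V^{n-\varsigma}\hat\phi^{n-\varsigma}))$ and $\mathbb D_\tau R^n=-V^{n-\varsigma}\langle f(\hat\phi^{n-\varsigma}),\mathbb D_\tau\phi^n\rangle+\kappa\langle\phi^{n-\varsigma}-V^{n-\varsigma}\hat\phi^{n-\varsigma},\mathbb D_\tau\phi^n\rangle$. *)

theory Defs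
  imports "HOL-Analysis.Analysis"
begin

text \<open>Grid functions v = {v_ij}, i,j integers; V_h = the M-periodic ones.\<close>
type_synonym grid = "int \<Rightarrow> int \<Rightarrow> real"

definition periodic_grid :: "nat \<Rightarrow> grid \<Rightarrow> bool" where
  "periodic_grid M v \<longleftrightarrow> (\<forall>i j. v (i + int M) j = v i j \<and> v i (j + int M) = v i j)"

definition ginner :: "real \<Rightarrow> nat \<Rightarrow> grid \<Rightarrow> grid \<Rightarrow> real" where
  "ginner h M v w = h^2 * (\<Sum>i\<in>{1..int M}. \<Sum>j\<in>{1..int M}. v i j * w i j)"

definition gnorm_inf :: "nat \<Rightarrow> grid \<Rightarrow> real" where
  "gnorm_inf M v = Max {\<bar>v i j\<bar> | i j. i \<in> {1..int M} \<and> j \<in> {1..int M}}"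

definition lap_h :: "real \<Rightarrow> grid \<Rightarrow> grid" where
  "lap_h h v = (\<lambda>i j. (v (i+1) j + v (i-1) j + v i (j+1) + v i (j-1) - 4 * v i j) / h^2)"

definition gmap :: "(real \<Rightarrow> real) \<Rightarrow> grid \<Rightarrow> grid" where
  "gmap g v = (\<lambda>i j. g (v i j))"

definition E1h :: "real \<Rightarrow> nat \<Rightarrow> (real \<Rightarrow> real) \<Rightarrow> grid \<Rightarrow> real" where
  "E1h h M F v = ginner h M (gmap F v) (\<lambda>_ _. 1)"

definition g_h :: "real \<Rightarrow> nat \<Rightarrow> (real \<Rightarrow> real) \<Rightarrow> grid \<Rightarrow> real \<Rightarrow> real" where
  "g_h h M F v w = exp w / exp (E1h h M F v)"

definition double_well :: "(real \<Rightarrow> real) \<Rightarrow> (real \<Rightarrow> real) \<Rightarrow> real \<Rightarrow> bool" where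
  "double_well F f \<beta> \<longleftrightarrow>
     F = (\<lambda>x. (1 - x^2)^2 / 4) \<and> f = (\<lambda>x. x - x^3) \<and> \<beta> = 1"

definition flory_huggins :: "(real \<Rightarrow> real) \<Rightarrow> (real \<Rightarrow> real) \<Rightarrow> real \<Rightarrow> bool" where
  "flory_huggins F f \<beta> \<longleftrightarrow>
     (\<exists>\<theta> \<theta>c. 0 < \<theta> \<and> \<theta> < \<theta>c \<and>
        F = (\<lambda>x. \<theta>/2 * ((1+x) * ln (1+x) + (1-x) * ln (1-x)) - \<theta>c/2 * x^2) \<and>
        f = (\<lambda>x. \<theta>/2 * ln ((1-x)/(1+x)) + \<theta>c * x) \<and>
        0 < \<beta> \<and> \<beta> < 1 \<and> f \<beta> = 0)"

text \<open>Membership of a C^1 function in W^{2,infinity}(R): V, V' bounded and V' Lipschitz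
  (i.e. V'' exists weakly and is essentially bounded).\<close>
definition W2inf :: "(real \<Rightarrow> real) \<Rightarrow> bool" where
  "W2inf V \<longleftrightarrow> bounded (range V) \<and> bounded (range (deriv V)) \<and>
     (\<exists>C. C-lipschitz_on UNIV (deriv V))"

definition assumption_A1 :: "(real \<Rightarrow> real) \<Rightarrow> real \<Rightarrow> bool" where
  "assumption_A1 V K1 \<longleftrightarrow> (\<forall>x. V differentiable at x) \<and> continuous_on UNIV (deriv V) \<and>
     W2inf V \<and> V 1 = 1 \<and> deriv V 1 = 0 \<and> (\<forall>x. \<bar>deriv V x\<bar> \<le> K1)"

definition assumption_A2 :: "(real \<Rightarrow> real) \<Rightarrow> real \<Rightarrow> bool" where
  "assumption_A2 V K2 \<longleftrightarrow> K2 > 0 \<and> (\<forall>x. 0 \<le> V x \<and> V x \<le> K2)"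

definition assumption_A3 :: "(real \<Rightarrow> real) \<Rightarrow> bool" where
  "assumption_A3 V \<longleftrightarrow> (\<forall>z1 z2. \<bar>z1 - 1\<bar> \<le> \<bar>z2 - 1\<bar> \<longrightarrow> \<bar>V z1 - 1\<bar> \<le> \<bar>V z2 - 1\<bar>)"

definition tau :: "(nat \<Rightarrow> real) \<Rightarrow> nat \<Rightarrow> real" where
  "tau t k = t k - t (k - 1)"

definition rr :: "(nat \<Rightarrow> real) \<Rightarrow> nat \<Rightarrow> real" where
  "rr t k = tau t k / tau t (k - 1)"

definition omega :: "real \<Rightarrow> real \<Rightarrow> real" where
  "omega \<mu> s = s powr (\<mu> - 1) / Gamma \<mu>"

definition tsig :: "real \<Rightarrow> (nat \<Rightarrow> real) \<Rightarrow> nat \<Rightarrow> real" where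
  "tsig \<sigma> t k = (1 - \<sigma>) * t k + \<sigma> * t (k - 1)"

text \<open>a_coef alpha t n k = a^{(n)}_{n-k}  (1 <= k <= n), with sigma = alpha/2.\<close>
definition a_coef :: "real \<Rightarrow> (nat \<Rightarrow> real) \<Rightarrow> nat \<Rightarrow> nat \<Rightarrow> real" where
  "a_coef \<alpha> t n k = (1 / tau t k) *
     integral {t (k - 1) .. min (t k) (tsig (\<alpha>/2) t n)}
       (\<lambda>s. omega (1 - \<alpha>) (tsig (\<alpha>/2) t n - s))"

text \<open>b_coef alpha t n k = b^{(n)}_{n-k}  (1 <= k <= n-1).\<close>
definition b_coef :: "real \<Rightarrow> (nat \<Rightarrow> real) \<Rightarrow> nat \<Rightarrow> nat \<Rightarrow> real" where
  "b_coef \<alpha> t n k = 2 / (tau t k * (tau t k + tau t (k + 1))) *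
     integral {t (k - 1) .. t k}
       (\<lambda>s. (s - (t k + t (k - 1)) / 2) * omega (1 - \<alpha>) (tsig (\<alpha>/2) t n - s))"

text \<open>B_coef alpha t n k = B^{(n)}_{n-k}  (1 <= k <= n).\<close>
definition B_coef :: "real \<Rightarrow> (nat \<Rightarrow> real) \<Rightarrow> nat \<Rightarrow> nat \<Rightarrow> real" where
  "B_coef \<alpha> t n k =
     (if n = 1 then a_coef \<alpha> t 1 1
      else if k = n then a_coef \<alpha> t n n + b_coef \<alpha> t n (n - 1) / rr t n
      else if k = 1 then a_coef \<alpha> t n 1 - b_coef \<alpha> t n 1
      else a_coef \<alpha> t n k + b_coef \<alpha> t n (k - 1) / rr t k - b_coef \<alpha> t n k)"

definition caputo_L21s :: "real \<Rightarrow> (nat \<Rightarrow> real) \<Rightarrow> (nat \<Rightarrow> grid) \<Rightarrow> nat \<Rightarrow> grid" where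
  "caputo_L21s \<alpha> t v n = (\<lambda>i j. \<Sum>k = 1..n. B_coef \<alpha> t n k * (v k i j - v (k - 1) i j))"

definition gsig :: "real \<Rightarrow> grid \<Rightarrow> grid \<Rightarrow> grid" where
  "gsig \<sigma> w w' = (\<lambda>i j. (1 - \<sigma>) * w i j + \<sigma> * w' i j)"

definition sESAV_solution ::
  "real \<Rightarrow> nat \<Rightarrow> real \<Rightarrow> real \<Rightarrow> real \<Rightarrow> real \<Rightarrow> (real \<Rightarrow> real) \<Rightarrow> (real \<Rightarrow> real)
   \<Rightarrow> real \<Rightarrow> (real \<Rightarrow> real) \<Rightarrow> (nat \<Rightarrow> real) \<Rightarrow> nat
   \<Rightarrow> (nat \<Rightarrow> grid) \<Rightarrow> (nat \<Rightarrow> real) \<Rightarrow> (nat \<Rightarrow> grid) \<Rightarrow> bool" where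
  "sESAV_solution L M m \<epsilon> \<alpha> \<kappa> F f \<beta> V t N \<phi> R \<phi>hat \<longleftrightarrow>
    (let h = L / real M; \<sigma> = \<alpha> / 2 in
     periodic_grid M (\<phi> 0) \<and>
     (\<forall>n\<in>{1..N}. periodic_grid M (\<phi> n)) \<and>
     \<comment> \<open>first step: predicted solution by the nonlinear L1-type step\<close>
     (1 \<le> N \<longrightarrow>
        periodic_grid M (\<phi>hat 1) \<and> gnorm_inf M (\<phi>hat 1) \<le> \<beta> \<and>
        (\<forall>i j. B_coef \<alpha> t 1 1 * (\<phi>hat 1 i j - \<phi> 0 i j) =
           m * (\<epsilon>^2 * lap_h h (gsig \<sigma> (\<phi>hat 1) (\<phi> 0)) i j
                + f (gsig \<sigma> (\<phi>hat 1) (\<phi> 0) i j)))) \<and>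
     \<comment> \<open>predicted solution for n >= 2\<close>
     (\<forall>n\<in>{2..N}. \<forall>i j. \<phi>hat n i j =
        min (max ((1 + rr t n) * \<phi> (n - 1) i j - rr t n * \<phi> (n - 2) i j) (- \<beta>)) \<beta>) \<and>
     \<comment> \<open>corrected solution and auxiliary variable\<close>
     (\<forall>n\<in>{1..N}.
        let \<phi>h = gsig \<sigma> (\<phi>hat n) (\<phi> (n - 1));
            \<phi>s = gsig \<sigma> (\<phi> n) (\<phi> (n - 1));
            Vn = V (g_h h M F \<phi>h (R (n - 1)));
            D\<phi> = (\<lambda>i j. (\<phi> n i j - \<phi> (n - 1) i j) / tau t n)
        in (\<forall>i j. caputo_L21s \<alpha> t \<phi> n i j =
               m * (\<epsilon>^2 * lap_h h \<phi>s i j + Vn * f (\<phi>h i j)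
                    - \<kappa> * (\<phi>s i j - Vn * \<phi>h i j))) \<and>
           (R n - R (n - 1)) / tau t n =
               - Vn * ginner h M (gmap f \<phi>h) D\<phi>
               + \<kappa> * ginner h M (\<lambda>i j. \<phi>s i j - Vn * \<phi>h i j) D\<phi>))"

end

theory Submission
  imports Defs
begin


lemma omega_eq: "omega (1-\<alpha>) x = x powr (-\<alpha>) / Gamma (1-\<alpha>)"
  by (simp add: omega_def)

lemma w_deriv:
  fixes \<alpha> T s :: real
  assumes "s < T" "0 < \<alpha>" "\<alpha> < 1"
  shows "((\<lambda>s. omega (1-\<alpha>) (T-s)) has_real_derivative \<alpha> * (T-s) powr (-\<alpha>-1) / Gamma (1-\<alpha>)) (at s)"
proof -
  have "((\<lambda>s. (T-s) powr (-\<alpha>) / Gamma (1-\<alpha>)) has_real_derivative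
        (-\<alpha>) * (T-s) powr (-\<alpha> - 1) * (-1) / Gamma (1-\<alpha>)) (at s)"
  proof -
    have g0: "Gamma (1-\<alpha>) > 0" by (rule Gamma_real_pos) (use assms in simp)
    then have g: "Gamma (1-\<alpha>) \<noteq> 0" by simp
    show ?thesis using assms g by (auto intro!: derivative_eq_intros)
  qed
  then show ?thesis by (simp add: omega_eq)
qed

lemma w_mono:
  assumes "x \<le> y" "y < T" "0 < \<alpha>" "\<alpha> < 1"
  shows "omega (1-\<alpha>) (T-x) \<le> omega (1-\<alpha>) (T-y)"
proof -
  have "(T-x) powr (-\<alpha>) \<le> (T-y) powr (-\<alpha>)"
    by (rule powr_mono2') (use assms in auto)
  moreover have "Gamma (1-\<alpha>) > 0" using assms by auto
  ultimately show ?thesis by (simp add: omega_eq divide_right_mono)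
qed

lemma w_cont:
  fixes \<alpha> T a b :: real
  assumes "b < T" "0 < \<alpha>" "\<alpha> < 1"
  shows "continuous_on {a..b} (\<lambda>s. omega (1-\<alpha>) (T-s))"
proof -
  have g0: "Gamma (1-\<alpha>) > 0" by (rule Gamma_real_pos) (use assms in simp)
    then have g: "Gamma (1-\<alpha>) \<noteq> 0" by simp
  show ?thesis unfolding omega_eq using assms g
  by (auto intro!: continuous_intros)
qed

lemma wd_mono:
  fixes \<alpha> T x y :: real
  assumes "x \<le> y" "y < T" "0 < \<alpha>" "\<alpha> < 1"
  shows "\<alpha> * (T-x) powr (-\<alpha>-1) / Gamma (1-\<alpha>) \<le> \<alpha> * (T-y) powr (-\<alpha>-1) / Gamma (1-\<alpha>)"
proof -
  have "(T-x) powr (-\<alpha>-1) \<le> (T-y) powr (-\<alpha>-1)"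
    using powr_mono2'[of "-\<alpha>-1" "T-y" "T-x"] assms by auto
  moreover have "Gamma (1-\<alpha>) > 0" using assms by auto
  ultimately show ?thesis using assms by (simp add: divide_right_mono)
qed

lemma w_chord:
  assumes "a < b" "b \<le> c" "c < d" "d < T" "0 < \<alpha>" "\<alpha> < 1"
  shows "(omega (1-\<alpha>) (T-b) - omega (1-\<alpha>) (T-a)) / (b-a)
       \<le> (omega (1-\<alpha>) (T-d) - omega (1-\<alpha>) (T-c)) / (d-c)"
proof -
  let ?w = "\<lambda>s. omega (1-\<alpha>) (T-s)"
  let ?w' = "\<lambda>s. \<alpha> * (T-s) powr (-\<alpha>-1) / Gamma (1-\<alpha>)"
  have D: "\<And>x. x < T \<Longrightarrow> (?w has_real_derivative ?w' x) (at x)" using assms by (intro w_deriv) auto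
  have "\<exists>l z. a < z \<and> z < b \<and> DERIV ?w z :> l \<and> ?w b - ?w a = (b - a) * l"
  proof (rule MVT)
    show "a < b" using assms by simp
    show "continuous_on {a..b} ?w" using assms by (intro w_cont) auto
    fix x assume "a < x" "x < b"
    then have "x < T" using assms by auto
    then show "?w differentiable (at x)" using D real_differentiable_def by blast
  qed
  then obtain l1 z1 where z1: "a < z1" "z1 < b" "DERIV ?w z1 :> l1" "?w b - ?w a = (b - a) * l1" by blast
  have "\<exists>l z. c < z \<and> z < d \<and> DERIV ?w z :> l \<and> ?w d - ?w c = (d - c) * l"
  proof (rule MVT)
    show "c < d" using assms by simp
    show "continuous_on {c..d} ?w" using assms by (intro w_cont) auto
    fix x assume "c < x" "x < d"
    then have "x < T" using assms by auto
    then show "?w differentiable (at x)" using D real_differentiable_def by blast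
  qed
  then obtain l2 z2 where z2: "c < z2" "z2 < d" "DERIV ?w z2 :> l2" "?w d - ?w c = (d - c) * l2" by blast
  have l1: "l1 = ?w' z1" using DERIV_unique[OF z1(3) D[of z1]] z1 assms by auto
  have l2: "l2 = ?w' z2" using DERIV_unique[OF z2(3) D[of z2]] z2 assms by auto
  have "l1 \<le> l2" unfolding l1 l2 by (rule wd_mono) (use assms z1 z2 in auto)
  moreover have "(?w b - ?w a) / (b-a) = l1" using z1 assms by simp
  moreover have "(?w d - ?w c) / (d-c) = l2" using z2 assms by simp
  ultimately show ?thesis by simp
qed



lemma hi_lin:
  fixes a b c K :: real
  assumes "a \<le> b"
  shows "((\<lambda>s. (s - c) * K) has_integral (((b-c)^2/2 - (a-c)^2/2) * K)) {a..b}"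
proof -
  have "((\<lambda>s. (s - c) * K) has_integral ((\<lambda>s. (s-c)^2/2 * K) b - (\<lambda>s. (s-c)^2/2 * K) a)) {a..b}"
  proof (rule fundamental_theorem_of_calculus[OF assms])
    fix x assume "x \<in> {a..b}"
    have "((\<lambda>s. (s-c)^2/2 * K) has_real_derivative (s' - c) * K) (at x within {a..b})" if "s' = x" for s'
      using that by (auto intro!: derivative_eq_intros simp: power2_eq_square field_simps)
    then show "((\<lambda>s. (s-c)^2/2 * K) has_vector_derivative (x - c) * K) (at x within {a..b})"
      using has_real_derivative_iff_has_vector_derivative by blast
  qed
  then show ?thesis by (simp add: algebra_simps)
qed

lemma hi_const:
  fixes a b K :: real
  assumes "a \<le> b"
  shows "((\<lambda>s. K) has_integral ((b-a) * K)) {a..b}"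
  using has_integral_const_real[of K a b] assms by simp

locale cell =
  fixes w :: "real \<Rightarrow> real" and a b :: real
  assumes ab: "a < b"
    and cont: "continuous_on {a..b} w"
    and mono: "\<And>x y. a \<le> x \<Longrightarrow> x \<le> y \<Longrightarrow> y \<le> b \<Longrightarrow> w x \<le> w y"
begin

definition "I0 = integral {a..b} w"
definition "I1 = integral {a..b} (\<lambda>s. (s - (b+a)/2) * w s)"

lemma hw: "(w has_integral I0) {a..b}"
  unfolding I0_def using integrable_continuous_interval[OF cont] by (simp add: integrable_integral)

lemma cont1: "continuous_on {x..y} (\<lambda>s. (s - (b+a)/2) * w s)" if "a \<le> x" "y \<le> b" for x y
proof -
  have "continuous_on {x..y} w" using continuous_on_subset[OF cont, of "{x..y}"] that by auto
  then show ?thesis by (auto intro!: continuous_intros)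
qed

lemma hw1: "((\<lambda>s. (s - (b+a)/2) * w s) has_integral I1) {a..b}"
  unfolding I1_def using integrable_continuous_interval[OF cont1[of a b]] by (simp add: integrable_integral)

lemma F1: "I1 \<ge> 0"
proof -
  let ?m = "(b+a)/2"
  have "((\<lambda>s. (s - ?m) * w ?m) has_integral (((b-?m)^2/2 - (a-?m)^2/2) * w ?m)) {a..b}"
    using ab by (intro hi_lin) auto
  moreover have "((b-?m)^2/2 - (a-?m)^2/2) = 0" by (simp add: power2_eq_square algebra_simps)
  ultimately have h: "((\<lambda>s. (s - ?m) * w ?m) has_integral 0) {a..b}" by simp
  show ?thesis
  proof (rule has_integral_le[OF h hw1])
    fix s assume s: "s \<in> {a..b}"
    have "0 \<le> (s - ?m) * (w s - w ?m)"
    proof (cases "s \<le> ?m")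
      case True
      then have "w s \<le> w ?m" using s ab by (intro mono) auto
      then show ?thesis using True by (intro mult_nonpos_nonpos) auto
    next
      case False
      then have "w ?m \<le> w s" using s ab by (intro mono) auto
      then show ?thesis using False by auto
    qed
    then show "(s - ?m) * w ?m \<le> (s - ?m) * w s" by (simp add: algebra_simps)
  qed
qed

lemma F4: "I0 \<ge> (b-a) * w a"
proof (rule has_integral_le[OF hi_const hw])
  show "a \<le> b" using ab by simp
  fix s assume "s \<in> {a..b}" then show "w a \<le> w s" by (intro mono) auto
qed

lemma F2: "I1 \<le> (b-a)/2 * (I0 - (b-a) * w a)"
proof -
  let ?m = "(b+a)/2"
  have "((\<lambda>s. (s - ?m) * w a) has_integral (((b-?m)^2/2 - (a-?m)^2/2) * w a)) {a..b}"
    using ab by (intro hi_lin) auto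
  moreover have "((b-?m)^2/2 - (a-?m)^2/2) = 0" by (simp add: power2_eq_square algebra_simps)
  ultimately have h1: "((\<lambda>s. (s - ?m) * w a) has_integral 0) {a..b}" by simp
  have h2: "((\<lambda>s. w s - w a) has_integral (I0 - (b-a) * w a)) {a..b}"
    using has_integral_diff[OF hw hi_const[of a b "w a"]] ab by simp
  have h3: "((\<lambda>s. (s - ?m) * w a + (b-a)/2 * (w s - w a)) has_integral (0 + (b-a)/2 * (I0 - (b-a) * w a))) {a..b}"
    by (intro has_integral_add h1 has_integral_mult_right h2)
  have "I1 \<le> 0 + (b-a)/2 * (I0 - (b-a) * w a)"
  proof (rule has_integral_le[OF hw1 h3])
    fix s assume s: "s \<in> {a..b}"
    have "w a \<le> w s" using s by (intro mono) auto
    moreover have "s - ?m \<le> (b-a)/2" using s by (simp add: field_simps)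
    ultimately have "(s - ?m - (b-a)/2) * (w s - w a) \<le> 0"
      by (intro mult_nonpos_nonneg) auto
    moreover have "(s - ?m - (b-a)/2) * (w s - w a) = (s - ?m) * w s - ((s - ?m) * w a + (b-a)/2 * (w s - w a))"
      by (simp add: field_simps)
    ultimately show "(s - ?m) * w s \<le> (s - ?m) * w a + (b-a)/2 * (w s - w a)"
      by linarith
  qed
  then show ?thesis by simp
qed

lemma F3: "I1 \<le> (b-a)^2 * (w b - w a) / 8"
proof -
  let ?m = "(b+a)/2"
  let ?g = "\<lambda>s. (s - ?m) * w s"
  have am: "a \<le> ?m" "?m \<le> b" using ab by auto
  define J1 where "J1 = integral {a..?m} ?g"
  define J2 where "J2 = integral {?m..b} ?g"
  have hJ1: "(?g has_integral J1) {a..?m}"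
    unfolding J1_def using integrable_continuous_interval[OF cont1[of a ?m]] am by (simp add: integrable_integral)
  have hJ2: "(?g has_integral J2) {?m..b}"
    unfolding J2_def using integrable_continuous_interval[OF cont1[of ?m b]] am by (simp add: integrable_integral)
  have "(?g has_integral (J1 + J2)) {a..b}" by (rule has_integral_combine[OF am hJ1 hJ2])
  then have I1: "I1 = J1 + J2" using hw1 has_integral_unique by blast
  have k1: "((\<lambda>s. (s - ?m) * w a) has_integral (((?m-?m)^2/2 - (a-?m)^2/2) * w a)) {a..?m}"
    using am by (intro hi_lin) auto
  have k2: "((\<lambda>s. (s - ?m) * w b) has_integral (((b-?m)^2/2 - (?m-?m)^2/2) * w b)) {?m..b}"
    using am by (intro hi_lin) auto
  have "J1 \<le> ((?m-?m)^2/2 - (a-?m)^2/2) * w a"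
  proof (rule has_integral_le[OF hJ1 k1])
    fix s assume s: "s \<in> {a..?m}"
    have "w a \<le> w s" using s am by (intro mono) auto
    then show "(s - ?m) * w s \<le> (s - ?m) * w a" using s by (intro mult_left_mono_neg) auto
  qed
  moreover have "J2 \<le> ((b-?m)^2/2 - (?m-?m)^2/2) * w b"
  proof (rule has_integral_le[OF hJ2 k2])
    fix s assume s: "s \<in> {?m..b}"
    have "w s \<le> w b" using s am by (intro mono) auto
    then show "(s - ?m) * w s \<le> (s - ?m) * w b" using s by (intro mult_left_mono) auto
  qed
  ultimately have "I1 \<le> ((?m-?m)^2/2 - (a-?m)^2/2) * w a + ((b-?m)^2/2 - (?m-?m)^2/2) * w b"
    using I1 by simp
  also have "\<dots> = (b-a)^2 * (w b - w a) / 8" by (simp add: power2_eq_square field_simps)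
  finally show ?thesis .
qed

lemma F5:
  assumes "\<And>s. a \<le> s \<Longrightarrow> s \<le> b \<Longrightarrow> d * (b - s) \<le> w b - w s"
  shows "I0 \<le> (b-a) * w b - d * (b-a)^2 / 2"
proof -
  have h: "((\<lambda>s. (s - b) * d + w b) has_integral (((b-b)^2/2 - (a-b)^2/2) * d + (b-a) * w b)) {a..b}"
    using ab by (intro has_integral_add hi_lin hi_const) auto
  have "I0 \<le> ((b-b)^2/2 - (a-b)^2/2) * d + (b-a) * w b"
  proof (rule has_integral_le[OF hw h])
    fix s assume "s \<in> {a..b}"
    then show "w s \<le> (s - b) * d + w b" using assms[of s] by (simp add: algebra_simps)
  qed
  also have "\<dots> = (b-a) * w b - d * (b-a)^2 / 2" by (simp add: power2_eq_square field_simps)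
  finally show ?thesis .
qed

end



lemma Gamma2: 
  fixes \<alpha> :: real assumes "0 < \<alpha>" "\<alpha> < 1"
  shows "Gamma (2-\<alpha>) = (1-\<alpha>) * Gamma (1-\<alpha>)"
proof -
  have "1 - \<alpha> \<notin> \<int>\<^sub>\<le>\<^sub>0" using assms by (auto elim!: nonpos_Ints_cases)
  from Gamma_plus1[OF this] show ?thesis by (simp add: algebra_simps)
qed

locale mesh =
  fixes \<alpha> :: real and t :: "nat \<Rightarrow> real" and n :: nat
  assumes al: "0 < \<alpha>" "\<alpha> < 1"
    and n1: "1 \<le> n"
    and tinc: "\<And>k. 1 \<le> k \<Longrightarrow> k \<le> n \<Longrightarrow> t (k-1) < t k"
    and rat: "\<And>k. 2 \<le> k \<Longrightarrow> k \<le> n \<Longrightarrow> rr t k \<ge> 4/7"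
begin

definition "T = tsig (\<alpha>/2) t n"
definition "w s = omega (1-\<alpha>) (T - s)"

lemma tmono: "i \<le> j \<Longrightarrow> j \<le> n \<Longrightarrow> t i \<le> t j"
proof (induction j)
  case 0 then show ?case by simp
next
  case (Suc j)
  show ?case
  proof (cases "i = Suc j")
    case True then show ?thesis by simp
  next
    case False
    then have "t i \<le> t j" using Suc by auto
    moreover have "t j < t (Suc j)" using tinc[of "Suc j"] Suc by auto
    ultimately show ?thesis by simp
  qed
qed

lemma tau_pos: "1 \<le> k \<Longrightarrow> k \<le> n \<Longrightarrow> tau t k > 0"
  using tinc unfolding tau_def by force

lemma T_gt: "t (n-1) < T" "T \<le> t n" "T - t (n-1) = (1 - \<alpha>/2) * tau t n"
proof -
  have d: "t n - t (n-1) > 0" using tinc[of n] n1 by auto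
  have e1: "T - t (n-1) = (1 - \<alpha>/2) * (t n - t (n-1))"
    unfolding T_def tsig_def by (simp add: algebra_simps)
  have e2: "t n - T = \<alpha>/2 * (t n - t (n-1))"
    unfolding T_def tsig_def by (simp add: algebra_simps)
  have p: "(1 - \<alpha>/2) * (t n - t (n-1)) > 0" using d al by simp
  have q: "\<alpha>/2 * (t n - t (n-1)) \<ge> 0" using d al by simp
  have "0 < T - t (n-1)" unfolding e1 by (rule p)
  then show "t (n-1) < T" by simp
  have "0 \<le> t n - T" unfolding e2 by (rule q)
  then show "T \<le> t n" by simp
  show "T - t (n-1) = (1 - \<alpha>/2) * tau t n" by (metis e1 tau_def)
qed

lemma tk_lt_T: "k \<le> n - 1 \<Longrightarrow> t k < T"
  using tmono[of k "n-1"] T_gt by force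

lemma w_nonneg: "w s \<ge> 0"
  unfolding w_def omega_def using al by auto

lemma cell_k: assumes "1 \<le> k" "k \<le> n - 1" shows "cell w (t (k-1)) (t k)"
proof
  show "t (k-1) < t k" using tinc[of k] assms by auto
  show "continuous_on {t (k - 1)..t k} w" unfolding w_def
    using w_cont[of "t k" T \<alpha>] tk_lt_T[of k] assms al by auto
  fix x y assume "t (k-1) \<le> x" "x \<le> y" "y \<le> t k"
  then show "w x \<le> w y" unfolding w_def using w_mono[of x y T \<alpha>] tk_lt_T[of k] assms al by auto
qed

definition "I0 k = integral {t (k-1)..t k} w"
definition "I1 k = integral {t (k-1)..t k} (\<lambda>s. (s - (t k + t (k-1))/2) * w s)"

lemma cellI: assumes "1 \<le> k" "k \<le> n - 1"
  shows "cell.I0 w (t (k-1)) (t k) = I0 k" "cell.I1 w (t (k-1)) (t k) = I1 k"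
  using cell_k[OF assms] unfolding cell.I0_def[OF cell_k[OF assms]] cell.I1_def[OF cell_k[OF assms]] I0_def I1_def
  by auto

lemma a_eq: assumes "1 \<le> k" "k \<le> n - 1" shows "a_coef \<alpha> t n k = I0 k / tau t k"
proof -
  have "min (t k) (tsig (\<alpha>/2) t n) = t k" using tk_lt_T[OF assms(2)] unfolding T_def by auto
  then show ?thesis unfolding a_coef_def I0_def w_def T_def by simp
qed

lemma b_eq: assumes "1 \<le> k" "k \<le> n - 1"
  shows "b_coef \<alpha> t n k = 2 * I1 k / (tau t k * (tau t k + tau t (k+1)))"
  unfolding b_coef_def I1_def w_def T_def by simp

lemma facts: assumes "1 \<le> k" "k \<le> n - 1"
  shows "I1 k \<ge> 0" "I1 k \<le> tau t k / 2 * (I0 k - tau t k * w (t (k-1)))"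
    "I1 k \<le> (tau t k)^2 * (w (t k) - w (t (k-1))) / 8"
    "I0 k \<ge> tau t k * w (t (k-1))"
    "\<And>d. (\<And>s. t (k-1) \<le> s \<Longrightarrow> s \<le> t k \<Longrightarrow> d * (t k - s) \<le> w (t k) - w s) \<Longrightarrow>
         I0 k \<le> tau t k * w (t k) - d * (tau t k)^2 / 2"
  using cell.F1[OF cell_k[OF assms]] cell.F2[OF cell_k[OF assms]] cell.F3[OF cell_k[OF assms]]
    cell.F4[OF cell_k[OF assms]] cell.F5[OF cell_k[OF assms]]
  unfolding cellI[OF assms] tau_def by auto

end



context mesh begin

lemma D1: assumes "1 \<le> k" "k \<le> n - 1"
  shows "a_coef \<alpha> t n k - b_coef \<alpha> t n k \<ge> w (t (k-1))"
proof -
  define x where "x = tau t k"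
  define x' where "x' = tau t (k+1)"
  have x: "x > 0" "x' > 0" unfolding x_def x'_def using tau_pos assms by auto
  note f = facts[OF assms]
  have I1: "0 \<le> I1 k" "I1 k \<le> x/2 * (I0 k - x * w (t (k-1)))" using f unfolding x_def by auto
  have "b_coef \<alpha> t n k = 2 * I1 k / (x * (x + x'))" unfolding b_eq[OF assms] x_def x'_def by simp
  also have "\<dots> \<le> 2 * I1 k / (x * x)"
    using x I1 by (intro divide_left_mono mult_left_mono) auto
  also have "\<dots> \<le> 2 * (x/2 * (I0 k - x * w (t (k-1)))) / (x * x)"
    using x I1 by (intro divide_right_mono) auto
  also have "\<dots> = I0 k / x - w (t (k-1))" using x by (simp add: field_simps)
  finally show ?thesis unfolding a_eq[OF assms] x_def by simp
qed

lemma cubic: fixes x y :: real assumes "x > 0" "y > 0" "7 * x \<ge> 4 * y"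
  shows "y^3 \<le> 2 * x^2 * (y + x)"
proof -
  have "(4*y/7)^2 \<le> x^2" using assms by (intro power_mono) auto
  moreover have "11*y/7 \<le> y + x" using assms by auto
  ultimately have "(4*y/7)^2 * (11*y/7) \<le> x^2 * (y + x)"
    using assms by (intro mult_mono) auto
  moreover have "(4*y/7)^2 * (11*y/7) = 176/343 * y^3" by (simp add: power2_eq_square power3_eq_cube)
  moreover have "y^3 \<ge> 0" using assms by simp
  ultimately show ?thesis by linarith
qed

lemma D2: assumes "1 \<le> k" "k \<le> n - 1"
  shows "w (t k) - a_coef \<alpha> t n k + b_coef \<alpha> t n k * (1 + 1 / rr t (k+1))
     - (if 2 \<le> k then b_coef \<alpha> t n (k-1) / rr t k else 0) \<ge> 0"
proof -
  define x where "x = tau t k"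
  have x: "x > 0" unfolding x_def using tau_pos assms by auto
  have r1: "rr t (k+1) > 0" unfolding rr_def using tau_pos assms by auto
  have tp1: "tau t k > 0" "tau t (k+1) > 0" using tau_pos[of k] tau_pos[of "k+1"] assms n1 by auto
  have tp: "0 < tau t k * (tau t k + tau t (k+1))" using tp1 by simp
  have bk: "b_coef \<alpha> t n k \<ge> 0" unfolding b_eq[OF assms] using facts(1)[OF assms] tp
    by (auto intro!: divide_nonneg_pos)
  have bk2: "b_coef \<alpha> t n k * (1 + 1 / rr t (k+1)) \<ge> 0" using bk r1 by auto
  note f = facts[OF assms]
  show ?thesis
  proof (cases "2 \<le> k")
    case False
    have "I0 k \<le> tau t k * w (t k) - 0 * (tau t k)^2 / 2"
    proof (rule f(5))
      fix s assume "t (k-1) \<le> s" "s \<le> t k"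
      then show "0 * (t k - s) \<le> w (t k) - w s" using cell.mono[OF cell_k[OF assms]] by auto
    qed
    then have "a_coef \<alpha> t n k \<le> w (t k)" unfolding a_eq[OF assms] using x unfolding x_def
      by (simp add: divide_le_eq mult.commute)
    then show ?thesis using False bk2 by simp
  next
    case True
    define y where "y = tau t (k-1)"
    have y: "y > 0" unfolding y_def using tau_pos assms True by auto
    have as1: "1 \<le> k-1" "k-1 \<le> n-1" using True assms by auto
    define d where "d = (w (t (k-1)) - w (t (k-2))) / y"
    have tt: "t (k-1) - t (k-2) = y" unfolding y_def tau_def using True
      by (metis diff_diff_left one_add_one)
    have d0: "d \<ge> 0" unfolding d_def using y cell.mono[OF cell_k[OF as1]] tt True
      by (auto simp: numeral_2_eq_2 intro!: divide_nonneg_pos)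
    have "I0 k \<le> tau t k * w (t k) - d * (tau t k)^2 / 2"
    proof (rule f(5))
      fix s assume s: "t (k-1) \<le> s" "s \<le> t k"
      show "d * (t k - s) \<le> w (t k) - w s"
      proof (cases "s = t k")
        case True then show ?thesis by simp
      next
        case False
        then have sl: "s < t k" using s by auto
        have "(omega (1-\<alpha>) (T - t (k-1)) - omega (1-\<alpha>) (T - t (k-2))) / (t (k-1) - t (k-2))
           \<le> (omega (1-\<alpha>) (T - t k) - omega (1-\<alpha>) (T - s)) / (t k - s)"
          using tt y s sl tk_lt_T[OF assms(2)] al by (intro w_chord) auto
        then have "d \<le> (w (t k) - w s) / (t k - s)" unfolding d_def w_def tt .
        then show ?thesis using sl by (simp add: le_divide_eq)
      qed
    qed
    then have A: "w (t k) - a_coef \<alpha> t n k \<ge> d * x / 2" unfolding a_eq[OF assms] x_def[symmetric]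
      using x by (simp add: field_simps power2_eq_square)
    have P: "I1 (k-1) \<le> y^2 * (w (t (k-1)) - w (t (k-2))) / 8"
      using facts(3)[OF as1] True unfolding y_def by (simp add: numeral_2_eq_2)
    have P2: "y^2 * (w (t (k-1)) - w (t (k-2))) = y^3 * d" unfolding d_def using y
      by (simp add: field_simps power2_eq_square power3_eq_cube)
    have rk: "rr t k = x / y" unfolding rr_def x_def y_def by simp
    have kk: "k - 1 + 1 = k" using True by simp
    have "b_coef \<alpha> t n (k-1) / rr t k = 2 * I1 (k-1) / (y * (y + x)) / (x / y)"
      unfolding b_eq[OF as1] rk kk unfolding y_def[symmetric] x_def[symmetric] by simp
    also have "\<dots> = 2 * I1 (k-1) / (x * (y + x))"
      using x y by (simp add: divide_divide_eq_right mult.commute mult.left_commute)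
    finally have "b_coef \<alpha> t n (k-1) / rr t k = 2 * I1 (k-1) / (x * (y + x))" .
    also have "\<dots> \<le> 2 * (y^3 * d / 8) / (x * (y + x))"
      using P P2 x y by (intro divide_right_mono) (auto simp: algebra_simps)
    also have "\<dots> \<le> 2 * (2 * x^2 * (y + x) * d / 8) / (x * (y + x))"
    proof -
      have "7 * x \<ge> 4 * y" using rat[of k] True assms x y unfolding rk by (simp add: field_simps)
      then have "y^3 \<le> 2 * x^2 * (y + x)" using cubic x y by auto
      then have "y^3 * d \<le> 2 * x^2 * (y + x) * d" using d0 by (intro mult_right_mono) auto
      then show ?thesis using x y by (intro divide_right_mono) (auto simp: algebra_simps)
    qed
    also have "\<dots> = d * x / 2"
    proof -
      have e: "2 * (2 * x^2 * (y + x) * d / 8) = (x * (y + x)) * (d * x / 2)"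
        by (simp add: power2_eq_square algebra_simps)
      have ne: "x * (y + x) \<noteq> 0" using x y by simp
      show ?thesis unfolding e using ne by (rule nonzero_mult_div_cancel_left)
    qed
    finally have Fb: "b_coef \<alpha> t n (k-1) / rr t k \<le> d * x / 2" .
    have "(if 2 \<le> k then b_coef \<alpha> t n (k-1) / rr t k else 0) = b_coef \<alpha> t n (k-1) / rr t k"
      using True by simp
    then show ?thesis using Fb A bk2 by linarith
  qed
qed

end



context mesh begin

lemma Bmono: assumes "1 \<le> k" "k + 1 \<le> n - 1"
  shows "B_coef \<alpha> t n k \<le> B_coef \<alpha> t n (k+1)"
proof -
  have k1: "1 \<le> k+1" "k+1 \<le> n-1" "1 \<le> k" "k \<le> n-1" using assms by auto
  have B1: "B_coef \<alpha> t n (k+1) = a_coef \<alpha> t n (k+1) + b_coef \<alpha> t n k / rr t (k+1) - b_coef \<alpha> t n (k+1)"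
  proof -
    have "n \<noteq> 1" "k+1 \<noteq> n" "k+1 \<noteq> 1" "k + 1 - 1 = k" using assms by auto
    then show ?thesis unfolding B_coef_def by simp
  qed
  have B0: "B_coef \<alpha> t n k = a_coef \<alpha> t n k - b_coef \<alpha> t n k + (if 2 \<le> k then b_coef \<alpha> t n (k-1) / rr t k else 0)"
  proof (cases "k = 1")
    case True
    have "n \<noteq> 1" "k \<noteq> n" using assms by auto
    then show ?thesis unfolding B_coef_def using True by simp
  next
    case False
    have "n \<noteq> 1" "k \<noteq> n" "\<not> k \<le> 1" "2 \<le> k" using assms False by auto
    then show ?thesis unfolding B_coef_def by simp
  qed
  have d1: "a_coef \<alpha> t n (k+1) - b_coef \<alpha> t n (k+1) \<ge> w (t k)" using D1[OF k1(1,2)] by simp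
  note d2 = D2[OF k1(3,4)]
  have e: "b_coef \<alpha> t n k * (1 + 1 / rr t (k+1)) = b_coef \<alpha> t n k + b_coef \<alpha> t n k / rr t (k+1)"
    by (simp add: algebra_simps)
  show ?thesis unfolding B1 B0 using d1 d2 e by linarith
qed

lemma B1pos: assumes "2 \<le> n" shows "B_coef \<alpha> t n 1 \<ge> 0"
proof -
  have "n \<noteq> 1" using assms by auto
  then have "B_coef \<alpha> t n 1 = a_coef \<alpha> t n 1 - b_coef \<alpha> t n 1" unfolding B_coef_def by simp
  moreover have "a_coef \<alpha> t n 1 - b_coef \<alpha> t n 1 \<ge> w (t 0)" using D1[of 1] assms by simp
  ultimately show ?thesis using w_nonneg[of "t 0"] by linarith
qed

lemma Blast: assumes "2 \<le> n"
  shows "B_coef \<alpha> t n n - B_coef \<alpha> t n (n-1) \<ge> a_coef \<alpha> t n n - w (t (n-1))"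
proof -
  have k1: "1 \<le> n-1" "n-1 \<le> n-1" using assms by auto
  have nn: "n - 1 + 1 = n" using assms by simp
  have n1': "n \<noteq> 1" using assms by auto
  have Bn: "B_coef \<alpha> t n n = a_coef \<alpha> t n n + b_coef \<alpha> t n (n-1) / rr t n"
    using n1' unfolding B_coef_def by simp
  have B0: "B_coef \<alpha> t n (n-1) = a_coef \<alpha> t n (n-1) - b_coef \<alpha> t n (n-1)
       + (if 2 \<le> n-1 then b_coef \<alpha> t n (n-1-1) / rr t (n-1) else 0)"
  proof (cases "n = 2")
    case True
    then show ?thesis unfolding B_coef_def by simp
  next
    case False
    have "n - 1 \<noteq> n" "n-1 \<noteq> 1" "2 \<le> n - 1" using assms False by auto
    then show ?thesis unfolding B_coef_def using n1' by simp
  qed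
  note d2 = D2[OF k1]
  have e: "b_coef \<alpha> t n (n-1) * (1 + 1 / rr t n) = b_coef \<alpha> t n (n-1) + b_coef \<alpha> t n (n-1) / rr t n"
    by (simp add: algebra_simps)
  show ?thesis unfolding Bn B0 using d2 e unfolding nn by linarith
qed

lemma an_int:
  "((\<lambda>s. omega (1-\<alpha>) (T - s)) has_integral
     ((T - t (n-1)) powr (1-\<alpha>) / ((1-\<alpha>) * Gamma (1-\<alpha>)))) {t (n-1)..T}"
proof -
  define F where "F s = - ((T - s) powr (1-\<alpha>) / ((1-\<alpha>) * Gamma (1-\<alpha>)))" for s
  have g: "Gamma (1-\<alpha>) > 0" by (rule Gamma_real_pos) (use al in simp)
  have g': "Gamma (1-\<alpha>) \<noteq> 0" using g by simp
  have "((\<lambda>s. omega (1-\<alpha>) (T - s)) has_integral (F T - F (t (n-1)))) {t (n-1)..T}"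
  proof (rule fundamental_theorem_of_calculus_interior)
    show "t (n-1) \<le> T" using T_gt by simp
    show "continuous_on {t (n - 1)..T} F" unfolding F_def using al g'
      by (auto intro!: continuous_intros continuous_on_powr')
    fix x assume x: "x \<in> {t (n-1)<..<T}"
    have "(F has_real_derivative
      - ((1-\<alpha>) * (T - x) powr (1-\<alpha>-1) * (-1) / ((1-\<alpha>) * Gamma (1-\<alpha>)))) (at x)"
      unfolding F_def using x al g' by (auto intro!: derivative_eq_intros)
    moreover have "- ((1-\<alpha>) * (T - x) powr (1-\<alpha>-1) * (-1) / ((1-\<alpha>) * Gamma (1-\<alpha>))) = omega (1-\<alpha>) (T - x)"
      unfolding omega_def using al g by simp
    ultimately show "(F has_vector_derivative omega (1-\<alpha>) (T - x)) (at x)"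
      using has_real_derivative_iff_has_vector_derivative by metis
  qed
  moreover have "F T - F (t (n-1)) = (T - t (n-1)) powr (1-\<alpha>) / ((1-\<alpha>) * Gamma (1-\<alpha>))"
    unfolding F_def using al by simp
  ultimately show ?thesis by simp
qed

lemma aw: "a_coef \<alpha> t n n - w (t (n-1)) = \<alpha>/2 * ((1-\<alpha>/2) * tau t n) powr (-\<alpha>) / Gamma (2-\<alpha>)"
proof -
  define u where "u = (1-\<alpha>/2) * tau t n"
  define x where "x = tau t n"
  have x: "x > 0" unfolding x_def using tau_pos n1 by auto
  have u: "u > 0" "u = (1-\<alpha>/2) * x" unfolding u_def x_def using tau_pos n1 al by auto
  have g: "Gamma (1-\<alpha>) > 0" by (rule Gamma_real_pos) (use al in simp)
  have Tu: "T - t (n-1) = u" using T_gt unfolding u_def by simp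
  have mn: "min (t n) T = T" using T_gt by auto
  have I: "integral {t (n-1)..T} (\<lambda>s. omega (1-\<alpha>) (T - s)) = u powr (1-\<alpha>) / ((1-\<alpha>) * Gamma (1-\<alpha>))"
    using integral_unique[OF an_int] unfolding Tu .
  have "a_coef \<alpha> t n n = 1 / tau t n * integral {t (n-1)..T} (\<lambda>s. omega (1-\<alpha>) (T - s))"
    by (simp only: a_coef_def T_def[symmetric] mn)
  also have "\<dots> = 1 / x * (u powr (1-\<alpha>) / ((1-\<alpha>) * Gamma (1-\<alpha>)))" unfolding I x_def ..
  also have "u powr (1-\<alpha>) = u * u powr (-\<alpha>)"
    using powr_add[of u 1 "-\<alpha>"] u by simp
  finally have A: "a_coef \<alpha> t n n = 1 / x * (u * u powr (-\<alpha>) / ((1-\<alpha>) * Gamma (1-\<alpha>)))" .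
  have W: "w (t (n-1)) = u powr (-\<alpha>) / Gamma (1-\<alpha>)" unfolding w_def omega_eq Tu by simp
  have G: "Gamma (2-\<alpha>) = (1-\<alpha>) * Gamma (1-\<alpha>)" using Gamma2 al by auto
  have alg: "1 / x * (((1-\<alpha>/2) * x) * P / ((1-\<alpha>) * G1)) - P / G1 = \<alpha>/2 * P / ((1-\<alpha>) * G1)"
    if "G1 > 0" for P G1
  proof -
    have "1 - \<alpha> \<noteq> 0" "x \<noteq> 0" "G1 \<noteq> 0" using al x that by auto
    then show ?thesis by (simp add: field_simps)
  qed
  show ?thesis unfolding A W G u_def[symmetric] using alg[OF g, of "u powr (-\<alpha>)"] unfolding u(2)[symmetric]
    by simp
qed

end

lemma final_bound:
  fixes \<alpha> m \<Lambda> \<tau> :: real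
  assumes "0 < \<alpha>" "\<alpha> < 1" "m > 0" "\<Lambda> > 0" "\<tau> > 0"
    and "\<tau> \<le> (4 / (11 * (1 - \<alpha>/2) * m * \<Lambda> * Gamma (2 - \<alpha>))) powr (1/\<alpha>)"
  shows "\<alpha>/2 * ((1-\<alpha>/2) * \<tau>) powr (-\<alpha>) / Gamma (2-\<alpha>) \<ge> m * (\<alpha>/2) * \<Lambda>"
proof -
  define G where "G = Gamma (2-\<alpha>)"
  have G: "G > 0" unfolding G_def by (rule Gamma_real_pos) (use assms in simp)
  define X where "X = 4 / (11 * (1 - \<alpha>/2) * m * \<Lambda> * G)"
  have X: "X > 0" unfolding X_def using assms G by auto
  have "\<tau> powr \<alpha> \<le> (X powr (1/\<alpha>)) powr \<alpha>"
    using assms unfolding X_def G_def by (intro powr_mono2) auto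
  also have "\<dots> = X" using X assms by (simp add: powr_powr)
  finally have tX: "\<tau> powr \<alpha> \<le> X" .
  have tp: "\<tau> powr \<alpha> > 0" using assms by simp
  have B: "\<tau> powr (-\<alpha>) \<ge> 1 / X"
    unfolding powr_minus_divide using tp tX X by (simp add: divide_simps)
  have A: "(1-\<alpha>/2) powr (-\<alpha>) \<ge> 1"
    using powr_mono'[of "-\<alpha>" 0 "1-\<alpha>/2"] assms by simp
  have prod: "((1-\<alpha>/2) * \<tau>) powr (-\<alpha>) = (1-\<alpha>/2) powr (-\<alpha>) * \<tau> powr (-\<alpha>)"
    by (rule powr_mult)
  have "((1-\<alpha>/2) * \<tau>) powr (-\<alpha>) \<ge> 1 / X"
    unfolding prod using A B X mult_mono[OF A B] by simp
  moreover have "1 / X = 11 * (1 - \<alpha>/2) / 4 * (m * \<Lambda> * G)" unfolding X_def by simp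
  moreover have "11 * (1 - \<alpha>/2) / 4 * (m * \<Lambda> * G) \<ge> m * \<Lambda> * G"
  proof -
    have h1: "1 \<le> 11 * (1 - \<alpha>/2) / 4" using assms by simp
    have "0 \<le> m * \<Lambda> * G" using assms G by simp
    then show ?thesis using mult_right_mono[OF h1, of "m * \<Lambda> * G"] by simp
  qed
  ultimately have "((1-\<alpha>/2) * \<tau>) powr (-\<alpha>) \<ge> m * \<Lambda> * G" by linarith
  then have "\<alpha>/2 * ((1-\<alpha>/2) * \<tau>) powr (-\<alpha>) / G \<ge> \<alpha>/2 * (m * \<Lambda> * G) / G"
    using G assms by (intro divide_right_mono mult_left_mono) auto
  then show ?thesis unfolding G_def[symmetric] using G by (simp add: algebra_simps)
qed



lemma my_hist:
  fixes Bm x :: "nat \<Rightarrow> real"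
  assumes "Bm 0 = 0" "\<And>k. k < j \<Longrightarrow> Bm k \<le> Bm (Suc k)" "\<And>k. k < j \<Longrightarrow> \<bar>x k\<bar> \<le> \<beta>"
  shows "\<bar>(\<Sum>k=1..j. Bm k * (x k - x (k-1))) - Bm j * x j\<bar> \<le> Bm j * \<beta>"
  using assms(2,3)
proof (induction j)
  case 0 then show ?case using assms(1) by simp
next
  case (Suc j)
  have IH: "\<bar>(\<Sum>k=1..j. Bm k * (x k - x (k-1))) - Bm j * x j\<bar> \<le> Bm j * \<beta>"
    using Suc.prems by (intro Suc.IH) auto
  have s: "(\<Sum>k=1..Suc j. Bm k * (x k - x (k-1))) = (\<Sum>k=1..j. Bm k * (x k - x (k-1))) + Bm (Suc j) * (x (Suc j) - x j)"
    by simp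
  have m: "Bm j \<le> Bm (Suc j)" "\<bar>x j\<bar> \<le> \<beta>" using Suc.prems by auto
  have "\<bar>(Bm (Suc j) - Bm j) * x j\<bar> \<le> (Bm (Suc j) - Bm j) * \<beta>"
    using m by (simp add: abs_mult mult_left_mono)
  define H where "H = (\<Sum>k=1..j. Bm k * (x k - x (k-1))) - Bm j * x j"
  define P where "P = (Bm (Suc j) - Bm j) * x j"
  have "(\<Sum>k=1..Suc j. Bm k * (x k - x (k-1))) - Bm (Suc j) * x (Suc j) = H - P"
    unfolding s H_def P_def by (simp add: algebra_simps)
  moreover have "\<bar>H - P\<bar> \<le> \<bar>H\<bar> + \<bar>P\<bar>" by (rule abs_triangle_ineq4)
  moreover have "\<bar>H\<bar> \<le> Bm j * \<beta>" using IH unfolding H_def .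
  moreover have "\<bar>P\<bar> \<le> (Bm (Suc j) - Bm j) * \<beta>" unfolding P_def by fact
  ultimately show ?case by (simp add: algebra_simps)
qed

lemma my_maxprin_arith:
  fixes Bn Bp H xn xp Nn Np gv m l \<sigma> \<kappa> \<mu> \<beta> :: real
  assumes eq: "Bn*xn - (Bn - Bp)*xp + H = m*(l*((1-\<sigma>)*Nn + \<sigma>*Np - 4*((1-\<sigma>)*xn + \<sigma>*xp)) + gv - \<kappa>*((1-\<sigma>)*xn + \<sigma>*xp))"
    and D: "Bn - Bp \<ge> m*\<sigma>*(4*l+\<kappa>)" and Bp: "Bp \<ge> 0" and H: "\<bar>H\<bar> \<le> Bp*\<beta>"
    and xn: "\<bar>xn\<bar> = \<mu>" and Nn: "\<bar>Nn\<bar> \<le> 4*\<mu>" and Np: "\<bar>Np\<bar> \<le> 4*\<beta>" and xp: "\<bar>xp\<bar> \<le> \<beta>"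
    and gv: "\<bar>gv\<bar> \<le> \<kappa>*\<beta>"
    and pos: "m > 0" "l > 0" "\<kappa> \<ge> 0" "0 < \<sigma>" "\<sigma> < 1"
  shows "\<mu> \<le> \<beta>"
proof -
  define c where "c = m*\<sigma>*(4*l+\<kappa>)"
  define a where "a = m*l*(1-\<sigma>)"
  define b where "b = m*l*\<sigma>"
  define K where "K = Bn + m*(1-\<sigma>)*(4*l+\<kappa>)"
  have a0: "a \<ge> 0" "b \<ge> 0" "c > 0" unfolding a_def b_def c_def using pos by auto
  have id: "K*xn - (-H + (Bn-Bp-c)*xp + a*Nn + b*Np + m*gv)
     = (Bn*xn - (Bn - Bp)*xp + H) - m*(l*((1-\<sigma>)*Nn + \<sigma>*Np - 4*((1-\<sigma>)*xn + \<sigma>*xp)) + gv - \<kappa>*((1-\<sigma>)*xn + \<sigma>*xp))"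
    unfolding K_def a_def b_def c_def by (simp add: algebra_simps)
  have E: "K*xn = -H + (Bn-Bp-c)*xp + a*Nn + b*Np + m*gv" using id eq by linarith
  have Kp: "K > 0" unfolding K_def using D Bp pos a0 unfolding c_def
    by (smt (verit) mult_pos_pos mult_nonneg_nonneg)
  have b1: "\<bar>(Bn-Bp-c)*xp\<bar> \<le> (Bn-Bp-c)*\<beta>" using D xp unfolding c_def by (simp add: abs_mult mult_left_mono)
  have b2: "\<bar>a*Nn\<bar> \<le> a*(4*\<mu>)" using a0 Nn by (simp add: abs_mult mult_left_mono)
  have b3: "\<bar>b*Np\<bar> \<le> b*(4*\<beta>)" using a0 Np by (simp add: abs_mult mult_left_mono)
  have b4: "\<bar>m*gv\<bar> \<le> m*(\<kappa>*\<beta>)" using pos gv by (simp add: abs_mult mult_left_mono)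
  have "\<bar>K*xn\<bar> = K*\<mu>" using Kp xn by (simp add: abs_mult)
  then have main: "K*\<mu> \<le> Bp*\<beta> + (Bn-Bp-c)*\<beta> + a*(4*\<mu>) + b*(4*\<beta>) + m*(\<kappa>*\<beta>)"
    using E H b1 b2 b3 b4 by (smt (verit))
  have e1: "K*\<mu> = (Bn + m*(1-\<sigma>)*\<kappa>)*\<mu> + a*(4*\<mu>)" unfolding K_def a_def by (simp add: algebra_simps)
  have e2: "Bp*\<beta> + (Bn-Bp-c)*\<beta> + b*(4*\<beta>) + m*(\<kappa>*\<beta>) = (Bn + m*(1-\<sigma>)*\<kappa>)*\<beta>"
    unfolding b_def c_def by (simp add: algebra_simps)
  have "(Bn + m*(1-\<sigma>)*\<kappa>)*\<mu> \<le> (Bn + m*(1-\<sigma>)*\<kappa>)*\<beta>" using main e1 e2 by linarith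
  moreover have "Bn + m*(1-\<sigma>)*\<kappa> > 0" using D Bp a0 pos unfolding c_def
    by (smt (verit) mult_nonneg_nonneg)
  ultimately show ?thesis by simp
qed


lemma my_per_i_nat: "periodic_grid M v \<Longrightarrow> v (i + int M * int q) j = v i j"
proof (induction q arbitrary: i)
  case 0 then show ?case by simp
next
  case (Suc q)
  have "v (i + int M * int (Suc q)) j = v ((i + int M * int q) + int M) j" by (simp add: algebra_simps)
  also have "\<dots> = v (i + int M * int q) j" using Suc.prems unfolding periodic_grid_def by blast
  finally show ?case using Suc by simp
qed

lemma my_per_j_nat: "periodic_grid M v \<Longrightarrow> v i (j + int M * int q) = v i j"
proof (induction q arbitrary: j)
  case 0 then show ?case by simp
next
  case (Suc q)
  have "v i (j + int M * int (Suc q)) = v i ((j + int M * int q) + int M)" by (simp add: algebra_simps)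
  also have "\<dots> = v i (j + int M * int q)" using Suc.prems unfolding periodic_grid_def by blast
  finally show ?case using Suc by simp
qed

lemma my_per_i: assumes "periodic_grid M v" shows "v (i + int M * q) j = v i j"
proof (cases "q \<ge> 0")
  case True
  then obtain q' where "q = int q'" using nonneg_int_cases by blast
  then show ?thesis using my_per_i_nat[OF assms] by simp
next
  case False
  then obtain q' where q: "q = - int q'" by (metis neg_int_cases less_le not_le of_nat_Suc)
  have "v ((i + int M * q) + int M * int q') j = v (i + int M * q) j" by (rule my_per_i_nat[OF assms])
  then show ?thesis using q by (simp add: algebra_simps)
qed

lemma my_per_j: assumes "periodic_grid M v" shows "v i (j + int M * q) = v i j"
proof (cases "q \<ge> 0")
  case True
  then obtain q' where "q = int q'" using nonneg_int_cases by blast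
  then show ?thesis using my_per_j_nat[OF assms] by simp
next
  case False
  then obtain q' where q: "q = - int q'" by (metis neg_int_cases less_le not_le of_nat_Suc)
  have "v i ((j + int M * q) + int M * int q') = v i (j + int M * q)" by (rule my_per_j_nat[OF assms])
  then show ?thesis using q by (simp add: algebra_simps)
qed

lemma my_per_red: assumes "periodic_grid M v" "M > 0"
  shows "v i j = v ((i-1) mod int M + 1) ((j-1) mod int M + 1)"
proof -
  have i: "i = ((i-1) mod int M + 1) + int M * ((i-1) div int M)" by (simp add: algebra_simps)
  have j: "j = ((j-1) mod int M + 1) + int M * ((j-1) div int M)" by (simp add: algebra_simps)
  have "v i j = v ((i-1) mod int M + 1) j" by (subst i) (rule my_per_i[OF assms(1)])
  also have "\<dots> = v ((i-1) mod int M + 1) ((j-1) mod int M + 1)" by (subst j) (rule my_per_j[OF assms(1)])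
  finally show ?thesis .
qed

lemma my_gset_finite: "finite {\<bar>v i j\<bar> | i j. i \<in> {1..int M} \<and> j \<in> {1..int M}}"
  by (rule finite_image_set2) auto

lemma my_gnorm_ge: assumes "i \<in> {1..int M}" "j \<in> {1..int M}" shows "\<bar>v i j\<bar> \<le> gnorm_inf M v"
  unfolding gnorm_inf_def using assms by (intro Max_ge[OF my_gset_finite]) blast

lemma my_gnorm_bound: assumes "periodic_grid M v" "M > 0" "gnorm_inf M v \<le> \<beta>"
  shows "\<bar>v i j\<bar> \<le> \<beta>"
proof -
  have "(i-1) mod int M + 1 \<in> {1..int M}" "(j-1) mod int M + 1 \<in> {1..int M}" using assms(2)
    by (auto simp: pos_mod_bound[of "int M"] add1_zle_eq)
  then have "\<bar>v ((i-1) mod int M + 1) ((j-1) mod int M + 1)\<bar> \<le> gnorm_inf M v" by (rule my_gnorm_ge)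
  then show ?thesis using my_per_red[OF assms(1,2), of i j] assms(3) by simp
qed

lemma my_gnorm_attained: assumes "M > 0"
  shows "\<exists>i j. \<bar>v i j\<bar> = gnorm_inf M v"
proof -
  have ne: "{\<bar>v i j\<bar> | i j. i \<in> {1..int M} \<and> j \<in> {1..int M}} \<noteq> {}"
  proof -
    have "\<bar>v 1 1\<bar> \<in> {\<bar>v i j\<bar> | i j. i \<in> {1..int M} \<and> j \<in> {1..int M}}" using assms by (intro CollectI exI[of _ "1::int"]) auto
    then show ?thesis by blast
  qed
  have "Max {\<bar>v i j\<bar> | i j. i \<in> {1..int M} \<and> j \<in> {1..int M}} \<in> {\<bar>v i j\<bar> | i j. i \<in> {1..int M} \<and> j \<in> {1..int M}}"
    by (rule Max_in[OF my_gset_finite ne])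
  then obtain i j where "Max {\<bar>v i j\<bar> | i j. i \<in> {1..int M} \<and> j \<in> {1..int M}} = \<bar>v i j\<bar>"
    by (auto simp only: mem_Collect_eq)
  then show ?thesis unfolding gnorm_inf_def by metis
qed

lemma my_gnorm_le: assumes "M > 0" "\<And>i j. \<bar>v i j\<bar> \<le> \<beta>" shows "gnorm_inf M v \<le> \<beta>"
  using my_gnorm_attained[OF assms(1), of v] assms(2) by metis

lemma my_nonlin_bound:
  fixes f F :: "real \<Rightarrow> real" and \<beta> \<kappa> y :: real
  assumes nl: "double_well F f \<beta> \<or> flory_huggins F f \<beta>"
    and kap: "\<forall>x\<in>{-\<beta>..\<beta>}. \<bar>deriv f x\<bar> \<le> \<kappa>"
    and y: "\<bar>y\<bar> \<le> \<beta>"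
  shows "\<bar>f y + \<kappa> * y\<bar> \<le> \<kappa> * \<beta>"
proof -
  have props: "\<beta> > 0 \<and> f \<beta> = 0 \<and> f (-\<beta>) = 0 \<and> (\<forall>x\<in>{-\<beta>..\<beta>}. \<exists>D. (f has_real_derivative D) (at x))"
    using nl
  proof
    assume "double_well F f \<beta>"
    then have f: "f = (\<lambda>x. x - x^3)" "\<beta> = 1" unfolding double_well_def by auto
    show ?thesis unfolding f by (auto intro!: derivative_eq_intros)
  next
    assume "flory_huggins F f \<beta>"
    then obtain \<theta> \<theta>c where th: "0 < \<theta>" "\<theta> < \<theta>c"
      and f: "f = (\<lambda>x. \<theta>/2 * ln ((1-x)/(1+x)) + \<theta>c * x)" and b: "0 < \<beta>" "\<beta> < 1" "f \<beta> = 0"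
      unfolding flory_huggins_def by blast
    have "f (-\<beta>) = - f \<beta>" unfolding f using b by (simp add: ln_div algebra_simps)
    moreover have "\<forall>x\<in>{-\<beta>..\<beta>}. \<exists>D. (f has_real_derivative D) (at x)"
    proof
      fix x assume x: "x \<in> {-\<beta>..\<beta>}"
      then have "1 - x > 0" "1 + x > 0" using b by auto
      then show "\<exists>D. (f has_real_derivative D) (at x)" unfolding f
        by (intro exI) (auto intro!: derivative_eq_intros)
    qed
    ultimately show ?thesis using b by simp
  qed
  define g where "g x = f x + \<kappa> * x" for x
  have gd: "\<exists>D. (g has_real_derivative D) (at x) \<and> D \<ge> 0" if "-\<beta> \<le> x" "x \<le> \<beta>" for x
  proof -
    have "x \<in> {-\<beta>..\<beta>}" using that by auto
    then obtain D where D: "(f has_real_derivative D) (at x)" using props by blast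
    have "deriv f x = D" using D by (rule DERIV_imp_deriv)
    moreover have "\<bar>deriv f x\<bar> \<le> \<kappa>" using kap that by auto
    ultimately have "D \<ge> -\<kappa>" by linarith
    moreover have "(g has_real_derivative D + \<kappa>) (at x)" unfolding g_def
      using D by (auto intro!: derivative_eq_intros)
    ultimately show ?thesis by (intro exI[of _ "D + \<kappa>"]) auto
  qed
  have yb: "-\<beta> \<le> y" "y \<le> \<beta>" using y by (simp_all add: abs_le_iff)
  have "g (-\<beta>) \<le> g y"
  proof (rule DERIV_nonneg_imp_nondecreasing[of "-\<beta>" y g])
    show "-\<beta> \<le> y" by (rule yb(1))
    fix x assume x: "-\<beta> \<le> x" "x \<le> y"
    have "-\<beta> \<le> x" "x \<le> \<beta>" using x yb by linarith+
    then show "\<exists>D. (g has_real_derivative D) (at x) \<and> D \<ge> 0" by (rule gd)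
  qed
  moreover have "g y \<le> g \<beta>"
  proof (rule DERIV_nonneg_imp_nondecreasing[of y \<beta> g])
    show "y \<le> \<beta>" by (rule yb(2))
    fix x assume x: "y \<le> x" "x \<le> \<beta>"
    have "-\<beta> \<le> x" "x \<le> \<beta>" using x yb by linarith+
    then show "\<exists>D. (g has_real_derivative D) (at x) \<and> D \<ge> 0" by (rule gd)
  qed
  ultimately show ?thesis using props unfolding g_def by (auto simp: abs_le_iff)
qed


lemma my_step:
  fixes \<alpha> m \<epsilon> \<kappa> \<beta> h Vn :: real and t :: "nat \<Rightarrow> real" and n M :: nat
    and \<phi> \<phi>hat :: "nat \<Rightarrow> grid" and f :: "real \<Rightarrow> real"
  assumes ms: "mesh \<alpha> t n" and M: "M > 0" and m: "m > 0" and eps: "\<epsilon> > 0" and h: "h > 0"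
    and kap: "\<kappa> \<ge> 0" and bet: "\<beta> > 0"
    and per: "periodic_grid M (\<phi> n)"
    and prev: "\<And>k i j. k < n \<Longrightarrow> \<bar>\<phi> k i j\<bar> \<le> \<beta>"
    and hatb: "\<And>i j. \<bar>\<phi>hat n i j\<bar> \<le> \<beta>"
    and V1: "0 \<le> Vn" and V2: "Vn \<le> 1"
    and fb: "\<And>y. \<bar>y\<bar> \<le> \<beta> \<Longrightarrow> \<bar>f y + \<kappa> * y\<bar> \<le> \<kappa> * \<beta>"
    and eq: "\<And>i j. caputo_L21s \<alpha> t \<phi> n i j =
        m * (\<epsilon>^2 * lap_h h (gsig (\<alpha>/2) (\<phi> n) (\<phi> (n - 1))) i j
             + Vn * f (gsig (\<alpha>/2) (\<phi>hat n) (\<phi> (n - 1)) i j)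
             - \<kappa> * (gsig (\<alpha>/2) (\<phi> n) (\<phi> (n - 1)) i j - Vn * gsig (\<alpha>/2) (\<phi>hat n) (\<phi> (n - 1)) i j))"
    and tn: "tau t n \<le> (4 / (11 * (1 - \<alpha>/2) * m * (4 * \<epsilon>^2 / h^2 + \<kappa>) * Gamma (2 - \<alpha>))) powr (1/\<alpha>)"
  shows "gnorm_inf M (\<phi> n) \<le> \<beta>"
proof -
  interpret mesh \<alpha> t n by (rule ms)
  define \<sigma> where "\<sigma> = \<alpha>/2"
  have \<sigma>: "0 < \<sigma>" "\<sigma> < 1" unfolding \<sigma>_def using al by auto
  define \<Lambda> where "\<Lambda> = 4 * \<epsilon>^2 / h^2 + \<kappa>"
  define l where "l = \<epsilon>^2 / h^2"
  have l: "l > 0" unfolding l_def using eps h by simp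
  have \<Lambda>l: "\<Lambda> = 4*l + \<kappa>" unfolding \<Lambda>_def l_def by simp
  have \<Lambda>p: "\<Lambda> > 0" using l kap \<Lambda>l by simp
  define Bm where "Bm k = (if k = 0 then 0 else B_coef \<alpha> t n k)" for k
  have Bm0: "Bm 0 = 0" unfolding Bm_def by simp
  have Bmon: "Bm k \<le> Bm (Suc k)" if "k < n - 1" for k
  proof (cases "k = 0")
    case True
    have "2 \<le> n" using that by auto
    then show ?thesis using B1pos True unfolding Bm_def by auto
  next
    case False
    then show ?thesis using Bmono[of k] that unfolding Bm_def by auto
  qed
  have Bnn: "Bm k \<ge> 0" if "k \<le> n - 1" for k
    using that
  proof (induction k)
    case 0 then show ?case by (simp add: Bm0)
  next
    case (Suc k) then show ?case using Bmon[of k] by auto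
  qed
  have tp: "tau t n > 0" using tau_pos[of n] n1 by simp
  have ab: "a_coef \<alpha> t n n - w (t (n-1)) \<ge> m * (\<alpha>/2) * \<Lambda>"
    unfolding aw using final_bound[OF al m \<Lambda>p tp] tn unfolding \<Lambda>_def by simp
  have Dn: "B_coef \<alpha> t n n - Bm (n-1) \<ge> m * \<sigma> * (4*l + \<kappa>)"
  proof (cases "n = 1")
    case True
    have "B_coef \<alpha> t n n = a_coef \<alpha> t n n" using True unfolding B_coef_def by simp
    moreover have "Bm (n-1) = 0" using True Bm0 by simp
    ultimately show ?thesis using ab[unfolded \<Lambda>l] w_nonneg[of "t (n-1)"] unfolding \<sigma>_def by linarith
  next
    case False
    then have "2 \<le> n" using n1 by auto
    moreover have "Bm (n-1) = B_coef \<alpha> t n (n-1)" using False n1 unfolding Bm_def by auto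
    ultimately show ?thesis using Blast[OF \<open>2 \<le> n\<close>] ab[unfolded \<Lambda>l] unfolding \<sigma>_def by linarith
  qed
  obtain i0 j0 where ij: "\<bar>\<phi> n i0 j0\<bar> = gnorm_inf M (\<phi> n)" using my_gnorm_attained[OF M] by blast
  define \<mu> where "\<mu> = gnorm_inf M (\<phi> n)"
  have all\<mu>: "\<And>i j. \<bar>\<phi> n i j\<bar> \<le> \<mu>" using my_gnorm_bound[OF per M, of \<mu>] unfolding \<mu>_def by simp
  define x where "x k = \<phi> k i0 j0" for k
  have hist': "\<bar>(\<Sum>k=1..n-1. Bm k * (x k - x (k-1))) - Bm (n-1) * x (n-1)\<bar> \<le> Bm (n-1) * \<beta>"
  proof (rule my_hist)
    show "Bm 0 = 0" by (rule Bm0)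
    show "\<And>k. k < n - 1 \<Longrightarrow> Bm k \<le> Bm (Suc k)" by (rule Bmon)
    show "\<And>k. k < n - 1 \<Longrightarrow> \<bar>x k\<bar> \<le> \<beta>" unfolding x_def using prev by auto
  qed
  define H where "H = (\<Sum>k=1..n-1. Bm k * (x k - x (k-1))) - Bm (n-1) * x (n-1)"
  have cap: "caputo_L21s \<alpha> t \<phi> n i0 j0 = B_coef \<alpha> t n n * x n - (B_coef \<alpha> t n n - Bm (n-1)) * x (n-1) + H"
  proof -
    have "caputo_L21s \<alpha> t \<phi> n i0 j0 = (\<Sum>k=1..n. B_coef \<alpha> t n k * (x k - x (k-1)))"
      unfolding caputo_L21s_def x_def ..
    also have "\<dots> = (\<Sum>k=1..n-1. B_coef \<alpha> t n k * (x k - x (k-1))) + B_coef \<alpha> t n n * (x n - x (n-1))"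
    proof -
      obtain n' where n': "n = Suc n'" using n1 by (cases n) auto
      show ?thesis unfolding n' by (simp add: sum.cl_ivl_Suc)
    qed
    also have "(\<Sum>k=1..n-1. B_coef \<alpha> t n k * (x k - x (k-1))) = (\<Sum>k=1..n-1. Bm k * (x k - x (k-1)))"
      by (rule sum.cong) (auto simp: Bm_def)
    finally show ?thesis unfolding H_def by (simp add: algebra_simps)
  qed
  define y where "y = gsig (\<alpha>/2) (\<phi>hat n) (\<phi> (n - 1)) i0 j0"
  define Nn where "Nn = \<phi> n (i0+1) j0 + \<phi> n (i0-1) j0 + \<phi> n i0 (j0+1) + \<phi> n i0 (j0-1)"
  define Np where "Np = \<phi> (n-1) (i0+1) j0 + \<phi> (n-1) (i0-1) j0 + \<phi> (n-1) i0 (j0+1) + \<phi> (n-1) i0 (j0-1)"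
  have lap: "\<epsilon>^2 * lap_h h (gsig (\<alpha>/2) (\<phi> n) (\<phi> (n - 1))) i0 j0
      = l * ((1-\<sigma>)*Nn + \<sigma>*Np - 4*((1-\<sigma>)*x n + \<sigma>*x (n-1)))"
    unfolding lap_h_def gsig_def l_def Nn_def Np_def x_def \<sigma>_def using h by (simp add: field_simps)
  have gs: "gsig (\<alpha>/2) (\<phi> n) (\<phi> (n - 1)) i0 j0 = (1-\<sigma>)*x n + \<sigma>*x (n-1)"
    unfolding gsig_def x_def \<sigma>_def by simp
  have E: "B_coef \<alpha> t n n * x n - (B_coef \<alpha> t n n - Bm (n-1)) * x (n-1) + H
     = m*(l*((1-\<sigma>)*Nn + \<sigma>*Np - 4*((1-\<sigma>)*x n + \<sigma>*x (n-1))) + Vn*(f y + \<kappa>*y) - \<kappa>*((1-\<sigma>)*x n + \<sigma>*x (n-1)))"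
  proof -
    have "B_coef \<alpha> t n n * x n - (B_coef \<alpha> t n n - Bm (n-1)) * x (n-1) + H
      = m * (l * ((1-\<sigma>)*Nn + \<sigma>*Np - 4*((1-\<sigma>)*x n + \<sigma>*x (n-1))) + Vn * f y
           - \<kappa> * ((1-\<sigma>)*x n + \<sigma>*x (n-1) - Vn * y))"
      using eq[of i0 j0] unfolding cap lap gs y_def[symmetric] .
    then show ?thesis by (simp add: algebra_simps)
  qed
  have bxn: "\<bar>x n\<bar> = \<mu>" unfolding x_def \<mu>_def using ij .
  have bNn: "\<bar>Nn\<bar> \<le> 4*\<mu>"
  proof -
    have "\<bar>\<phi> n (i0+1) j0\<bar> \<le> \<mu>" "\<bar>\<phi> n (i0-1) j0\<bar> \<le> \<mu>" "\<bar>\<phi> n i0 (j0+1)\<bar> \<le> \<mu>" "\<bar>\<phi> n i0 (j0-1)\<bar> \<le> \<mu>"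
      using all\<mu> by auto
    then show ?thesis unfolding Nn_def by (smt (verit))
  qed
  have nn: "n - 1 < n" using n1 by simp
  have bNp: "\<bar>Np\<bar> \<le> 4*\<beta>"
  proof -
    have "\<bar>\<phi> (n-1) (i0+1) j0\<bar> \<le> \<beta>" "\<bar>\<phi> (n-1) (i0-1) j0\<bar> \<le> \<beta>" "\<bar>\<phi> (n-1) i0 (j0+1)\<bar> \<le> \<beta>" "\<bar>\<phi> (n-1) i0 (j0-1)\<bar> \<le> \<beta>"
      using prev[OF nn] by auto
    then show ?thesis unfolding Np_def by (smt (verit))
  qed
  have bxp: "\<bar>x (n-1)\<bar> \<le> \<beta>" unfolding x_def using prev[OF nn] .
  have by': "\<bar>y\<bar> \<le> \<beta>"
  proof -
    have y: "y = (1-\<sigma>) * \<phi>hat n i0 j0 + \<sigma> * \<phi> (n-1) i0 j0" unfolding y_def gsig_def \<sigma>_def by simp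
    have "\<bar>(1-\<sigma>) * \<phi>hat n i0 j0\<bar> \<le> (1-\<sigma>) * \<beta>" using \<sigma> hatb[of i0 j0]
      by (simp add: abs_mult mult_left_mono)
    moreover have "\<bar>\<sigma> * \<phi> (n-1) i0 j0\<bar> \<le> \<sigma> * \<beta>" using \<sigma> prev[OF nn, of i0 j0]
      by (simp add: abs_mult mult_left_mono)
    moreover have "(1-\<sigma>) * \<beta> + \<sigma> * \<beta> = \<beta>" by (simp add: algebra_simps)
    moreover have "\<bar>(1-\<sigma>) * \<phi>hat n i0 j0 + \<sigma> * \<phi> (n-1) i0 j0\<bar>
        \<le> \<bar>(1-\<sigma>) * \<phi>hat n i0 j0\<bar> + \<bar>\<sigma> * \<phi> (n-1) i0 j0\<bar>" by (rule abs_triangle_ineq)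
    ultimately show ?thesis unfolding y by linarith
  qed
  have bgv: "\<bar>Vn*(f y + \<kappa>*y)\<bar> \<le> \<kappa>*\<beta>"
  proof -
    have "\<bar>Vn*(f y + \<kappa>*y)\<bar> = Vn * \<bar>f y + \<kappa>*y\<bar>" using V1 by (simp add: abs_mult)
    also have "\<dots> \<le> Vn * (\<kappa>*\<beta>)" using fb[OF by'] V1 by (intro mult_left_mono) auto
    also have "\<dots> \<le> \<kappa>*\<beta>" using V1 V2 kap bet by (intro mult_left_le_one_le) auto
    finally show ?thesis .
  qed
  have "\<mu> \<le> \<beta>"
    by (rule my_maxprin_arith[OF E Dn Bnn[of "n-1"] hist'[folded H_def] bxn bNn bNp bxp bgv m l kap \<sigma>]) simp
  then show ?thesis unfolding \<mu>_def .
qed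

theorem mainTheorem12:
  fixes L m \<epsilon> \<alpha> \<kappa> \<beta> K1 :: real
    and M N :: nat
    and F f V :: "real \<Rightarrow> real"
    and t :: "nat \<Rightarrow> real"
    and \<phi> \<phi>hat :: "nat \<Rightarrow> grid"
    and R :: "nat \<Rightarrow> real"
  assumes L_pos: "L > 0" and M_pos: "M > 0"
    and m_pos: "m > 0" and eps_pos: "\<epsilon> > 0"
    and alpha: "0 < \<alpha>" "\<alpha> < 1"
    and nonlin: "double_well F f \<beta> \<or> flory_huggins F f \<beta>"
    and A1: "assumption_A1 V K1" and A2: "assumption_A2 V 1" and A3: "assumption_A3 V"
    and t0: "t 0 = 0" and t_mono: "\<forall>k\<in>{1..N}. t (k - 1) < t k"
    and ratio: "\<forall>k\<in>{2..N}. rr t k \<ge> 4/7"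
    and kappa_nonneg: "\<kappa> \<ge> 0"
    and kappa: "\<forall>x\<in>{-\<beta>..\<beta>}. \<bar>deriv f x\<bar> \<le> \<kappa>"
    and init: "gnorm_inf M (\<phi> 0) \<le> \<beta>"
    and tau1: "1 \<le> N \<Longrightarrow> tau t 1 \<le> min
        ((4 / (11 * (\<alpha>/2) * m * (\<kappa> + 4 * \<epsilon>^2 / (L / real M)^2) * Gamma (2 - \<alpha>))) powr (1/\<alpha>))
        ((4 / (11 * \<kappa> * (1 - \<alpha>/2) * m * Gamma (2 - \<alpha>))) powr (1/\<alpha>))"
    and taun: "\<forall>n\<in>{1..N}. tau t n \<le>
        (4 / (11 * (1 - \<alpha>/2) * m * (4 * \<epsilon>^2 / (L / real M)^2 + \<kappa>) * Gamma (2 - \<alpha>))) powr (1/\<alpha>)"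
    and scheme: "sESAV_solution L M m \<epsilon> \<alpha> \<kappa> F f \<beta> V t N \<phi> R \<phi>hat"
  shows "\<forall>n\<in>{1..N}. gnorm_inf M (\<phi> n) \<le> \<beta>"
proof -
  note S = scheme[unfolded sESAV_solution_def Let_def]
  have per0: "periodic_grid M (\<phi> 0)" using S[THEN conjunct1] .
  have perN: "\<forall>n\<in>{1..N}. periodic_grid M (\<phi> n)" using S[THEN conjunct2, THEN conjunct1] .
  note hat1 = S[THEN conjunct2, THEN conjunct2, THEN conjunct1]
  note hatn = S[THEN conjunct2, THEN conjunct2, THEN conjunct2, THEN conjunct1]
  note eqn = S[THEN conjunct2, THEN conjunct2, THEN conjunct2, THEN conjunct2]
  have bet: "\<beta> > 0" using nonlin unfolding double_well_def flory_huggins_def by auto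
  have hpos: "L / real M > 0" using L_pos M_pos by simp
  have Vb: "\<And>z. 0 \<le> V z \<and> V z \<le> 1" using A2 unfolding assumption_A2_def by auto
  have fb: "\<And>y. \<bar>y\<bar> \<le> \<beta> \<Longrightarrow> \<bar>f y + \<kappa> * y\<bar> \<le> \<kappa> * \<beta>"
    using my_nonlin_bound[OF nonlin kappa] by blast
  have all: "\<forall>i j. \<bar>\<phi> n i j\<bar> \<le> \<beta>" if "n \<le> N" for n
    using that
  proof (induction n rule: less_induct)
    case (less n)
    show ?case
    proof (cases "n = 0")
      case True
      then show ?thesis using my_gnorm_bound[OF per0 M_pos init] by simp
    next
      case False
      then have nN: "n \<in> {1..N}" using less.prems by auto
      have prev: "\<And>k i j. k < n \<Longrightarrow> \<bar>\<phi> k i j\<bar> \<le> \<beta>" using less.IH less.prems by auto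
      have ms: "mesh \<alpha> t n"
      proof
        show "0 < \<alpha>" "\<alpha> < 1" by (rule alpha(1), rule alpha(2))
        show "1 \<le> n" using nN by simp
        show "\<And>k. 1 \<le> k \<Longrightarrow> k \<le> n \<Longrightarrow> t (k - 1) < t k" using t_mono nN by auto
        show "\<And>k. 2 \<le> k \<Longrightarrow> k \<le> n \<Longrightarrow> 4/7 \<le> rr t k" using ratio nN by auto
      qed
      have per: "periodic_grid M (\<phi> n)" using perN nN by blast
      have hatb: "\<And>i j. \<bar>\<phi>hat n i j\<bar> \<le> \<beta>"
      proof -
        fix i j
        show "\<bar>\<phi>hat n i j\<bar> \<le> \<beta>"
        proof (cases "n = 1")
          case True
          have "periodic_grid M (\<phi>hat 1)" "gnorm_inf M (\<phi>hat 1) \<le> \<beta>" using hat1 nN True by auto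
          then show ?thesis using my_gnorm_bound[OF _ M_pos] True by blast
        next
          case False
          have n2: "n \<in> {2..N}" using nN False by auto
          have "\<phi>hat n i j = min (max ((1 + rr t n) * \<phi> (n - 1) i j - rr t n * \<phi> (n - 2) i j) (- \<beta>)) \<beta>"
            by (rule hatn[rule_format, OF n2])
          then show ?thesis using bet by (simp add: abs_le_iff)
        qed
      qed
      have eqa: "\<forall>i j. caputo_L21s \<alpha> t \<phi> n i j =
        m * (\<epsilon>^2 * lap_h (L / real M) (gsig (\<alpha>/2) (\<phi> n) (\<phi> (n - 1))) i j
             + V (g_h (L / real M) M F (gsig (\<alpha>/2) (\<phi>hat n) (\<phi> (n - 1))) (R (n - 1))) * f (gsig (\<alpha>/2) (\<phi>hat n) (\<phi> (n - 1)) i j)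
             - \<kappa> * (gsig (\<alpha>/2) (\<phi> n) (\<phi> (n - 1)) i j - V (g_h (L / real M) M F (gsig (\<alpha>/2) (\<phi>hat n) (\<phi> (n - 1))) (R (n - 1))) * gsig (\<alpha>/2) (\<phi>hat n) (\<phi> (n - 1)) i j))"
        using eqn[rule_format, OF nN] by (rule conjunct1)
      have tn: "tau t n \<le> (4 / (11 * (1 - \<alpha>/2) * m * (4 * \<epsilon>^2 / (L / real M)^2 + \<kappa>) * Gamma (2 - \<alpha>))) powr (1/\<alpha>)"
        using taun nN by blast
      have "gnorm_inf M (\<phi> n) \<le> \<beta>"
        by (rule my_step[where \<phi>=\<phi> and \<phi>hat=\<phi>hat and f=f and t=t and \<alpha>=\<alpha> and n=n and M=M, OF ms M_pos m_pos eps_pos hpos kappa_nonneg bet per prev hatb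
              Vb[THEN conjunct1] Vb[THEN conjunct2] fb eqa[rule_format] tn])
      then show ?thesis using my_gnorm_bound[OF per M_pos] by blast
    qed
  qed
  show ?thesis
  proof
    fix n assume n: "n \<in> {1..N}"
    then show "gnorm_inf M (\<phi> n) \<le> \<beta>" using all[of n] my_gnorm_le[OF M_pos] by auto
  qed
qed

end
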